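(* For every integer $n\ge 2$, $$ \frac{1}{3}\left(2^{n-1}+\frac{5+(-1)^n}{2}2^{\lfloor n/2\rfloor-1}+\frac{-1+(-1)^n+2(-1)^{\lfloor (n+1)/2\rfloor n}}{2}\right) =\sum_{d=0}^{\lfloor (n-2)/2\rfloor}\left(F_{n-d-1}^{(d)}+\frac{1+(-1)^{nd}}{2}F^{(\lfloor d/2\rfloor)}_{\lfloor n/2\rfloor-\lfloor (d+1)/2\rfloor}\right). $$
   Context: $F_0,F_1,F_2,\dots=0,1,1,2,3,5,\dots$ is the Fibonacci sequence, and the convolved Fibonacci sequences are defined by $F_m^{(0)}=F_m$ and $F_m^{(c+1)}=\sum_{i=0}^{m}F_iF_{m-i}^{(c)}$ for $m\ge 0$, $c\ge 0$. *)

theory Defs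
  imports Complex_Main "HOL-Number_Theory.Fib"
begin

fun conv_fib :: "nat \<Rightarrow> nat \<Rightarrow> nat" where
  "conv_fib 0 m = fib m"
| "conv_fib (Suc c) m = (\<Sum>i=0..m. fib i * conv_fib c (m - i))"

end

theory Submission
  imports Defs
begin

lemma G_zero: "k \<le> d \<Longrightarrow> conv_fib d k = 0"
proof (induction d arbitrary: k)
  case 0 then show ?case by simp
next
  case (Suc d)
  show ?case
  unfolding conv_fib.simps
  proof (rule sum.neutral, clarify)
    fix i assume "i \<in> {0..k}"
    show "fib i * conv_fib d (k - i) = 0"
    proof (cases i)
      case 0 then show ?thesis by simp
    next
      case (Suc j) then have "k - i \<le> d" using Suc.prems by simp
      then show ?thesis using Suc.IH by simp
    qed
  qed
qed

lemma G_rec: "conv_fib (Suc c) (Suc (Suc m)) =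
   conv_fib (Suc c) (Suc m) + conv_fib (Suc c) m + conv_fib c (Suc m)"
proof -
  have "conv_fib (Suc c) (Suc (Suc m)) = (\<Sum>i\<le>Suc (Suc m). fib i * conv_fib c (Suc (Suc m) - i))"
    by (simp add: atLeast0AtMost)
  also have "\<dots> = conv_fib c (Suc m) + (\<Sum>i\<le>m. fib (Suc (Suc i)) * conv_fib c (m - i))"
    by (simp only: sum.atMost_Suc_shift) (simp del: sum.atMost_Suc)
  also have "\<dots> = conv_fib c (Suc m) + (\<Sum>i\<le>m. fib (Suc i) * conv_fib c (m - i))
      + (\<Sum>i\<le>m. fib i * conv_fib c (m - i))"
    by (simp add: sum.distrib algebra_simps)
  also have "(\<Sum>i\<le>m. fib (Suc i) * conv_fib c (m - i)) = conv_fib (Suc c) (Suc m)"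
    by (simp only: conv_fib.simps atLeast0AtMost sum.atMost_Suc_shift) (simp del: sum.atMost_Suc)
  also have "(\<Sum>i\<le>m. fib i * conv_fib c (m - i)) = conv_fib (Suc c) m"
    by (simp add: atLeast0AtMost)
  finally show ?thesis by simp
qed

definition B :: "nat \<Rightarrow> nat" where "B n = (\<Sum>d\<le>n. conv_fib d (n - d))"

lemma B_rec: "B (Suc (Suc n)) = B (Suc n) + 2 * B n"
proof -
  have step: "conv_fib d (Suc (Suc n) - d) = conv_fib d (Suc n - d) + conv_fib d (n - d)
      + (if d = 0 then 0 else conv_fib (d - 1) (Suc n - d))" if "d \<le> n" for d
  proof (cases d)
    case 0 then show ?thesis by simp
  next
    case (Suc c)
    have e1: "Suc (Suc n) - d = Suc (Suc (n - d))" "Suc n - d = Suc (n - d)" using that by auto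
    show ?thesis unfolding e1 using G_rec[of c "n - d"] Suc by simp
  qed
  have "B (Suc (Suc n)) = (\<Sum>d\<le>n. conv_fib d (Suc (Suc n) - d))"
    unfolding B_def by (simp add: G_zero)
  also have "\<dots> = (\<Sum>d\<le>n. conv_fib d (Suc n - d)) + (\<Sum>d\<le>n. conv_fib d (n - d))
      + (\<Sum>d\<le>n. (if d = 0 then 0 else conv_fib (d - 1) (Suc n - d)))"
    by (simp add: step sum.distrib)
  also have "(\<Sum>d\<le>n. conv_fib d (Suc n - d)) = B (Suc n)"
    unfolding B_def by (simp add: G_zero)
  also have "(\<Sum>d\<le>n. conv_fib d (n - d)) = B n" unfolding B_def ..
  also have "(\<Sum>d\<le>n. (if d = 0 then 0 else conv_fib (d - 1) (Suc n - d))) = B n"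
  proof (cases n)
    case 0 then show ?thesis by (simp add: B_def)
  next
    case (Suc k)
    have "(\<Sum>d\<le>Suc k. (if d = 0 then 0 else conv_fib (d - 1) (Suc (Suc k) - d)))
       = (\<Sum>i\<le>k. conv_fib i (Suc k - i))"
      by (subst sum.atMost_Suc_shift) simp
    then show ?thesis unfolding Suc by (simp add: B_def G_zero)
  qed
  finally show ?thesis by simp
qed

lemma B_closed: "3 * real (B n) = 2 ^ n - (-1) ^ n"
proof (induction n rule: fib.induct)
  case 1 then show ?case by (simp add: B_def)
next
  case 2 then show ?case by (simp add: B_def)
next
  case (3 n)
  have "3 * real (B (Suc (Suc n))) = 3 * real (B (Suc n)) + 2 * (3 * real (B n))"
    by (simp add: B_rec)
  also have "\<dots> = 2 ^ Suc (Suc n) - (-1) ^ Suc (Suc n)" using 3 by simp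
  finally show ?case .
qed

lemma ext_sum: "(a::nat) \<le> b \<Longrightarrow> (\<And>d. a < d \<Longrightarrow> d \<le> b \<Longrightarrow> f d = (0::real)) \<Longrightarrow>
   (\<Sum>d=0..a. f d) = (\<Sum>d\<le>b. f d)"
  unfolding atLeast0AtMost
  by (rule sum.mono_neutral_left) auto


lemma partA:
  assumes "N = 2*k+1 \<or> N = 2*k+2"
  shows "(\<Sum>d=0..k. real (conv_fib d (N - d))) = real (B N)"
proof -
  have "(\<Sum>d=0..k. real (conv_fib d (N - d))) = (\<Sum>d\<le>N. real (conv_fib d (N - d)))"
    by (rule ext_sum) (use assms in \<open>auto intro!: G_zero\<close>)
  then show ?thesis by (simp add: B_def)
qed

lemma partT:
  fixes c :: "nat \<Rightarrow> real"
  shows "(\<Sum>d=0..k. c d * real (conv_fib (d div 2) (k+1 - (d+1) div 2)))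
    = (\<Sum>e\<le>k+1. c (2*e) * real (conv_fib e (k+1-e))) + (\<Sum>e\<le>k+1. c (2*e+1) * real (conv_fib e (k-e)))"
proof -
  have "(\<Sum>d=0..k. c d * real (conv_fib (d div 2) (k+1 - (d+1) div 2)))
     = (\<Sum>d\<le>Suc (2*(k+1)). c d * real (conv_fib (d div 2) (k+1 - (d+1) div 2)))"
  proof (rule ext_sum)
    fix d assume "k < d"
    then have "k+1 - (d+1) div 2 \<le> d div 2" by presburger
    then show "c d * real (conv_fib (d div 2) (k+1 - (d+1) div 2)) = 0" by (simp add: G_zero)
  qed simp
  also have "\<dots> = (\<Sum>e\<le>k+1. c (2*e) * real (conv_fib e (k+1-e)) + c (2*e+1) * real (conv_fib e (k-e)))"
    by (subst sum.in_pairs_0) simp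
  finally show ?thesis by (simp add: sum.distrib)
qed

lemma sumB: "(\<Sum>e\<le>k+1. real (conv_fib e (k+1-e))) = real (B (k+1))"
  "(\<Sum>e\<le>k+1. real (conv_fib e (k-e))) = real (B k)"
  by (simp_all add: B_def G_zero del: sum.atMost_Suc) (simp add: G_zero)

theorem corollary1:
  fixes n :: nat
  assumes "n \<ge> 2"
  shows "(1/3::real) * (2 ^ (n - 1)
            + ((5 + (-1) ^ n) / 2) * 2 ^ (n div 2 - 1)
            + (-1 + (-1) ^ n + 2 * (-1) ^ (((n + 1) div 2) * n)) / 2)
         = (\<Sum>d=0..(n - 2) div 2.
              real (conv_fib d (n - d - 1))
              + ((1 + (-1) ^ (n * d)) / 2) * real (conv_fib (d div 2) (n div 2 - (d + 1) div 2)))"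
proof -
  define k where "k = (n - 2) div 2"
  have "n = 2*k+2 \<or> n = 2*k+3" using assms unfolding k_def by presburger
  then show ?thesis
  proof
    assume n: "n = 2*k+2"
    have A: "(\<Sum>d=0..k. real (conv_fib d (2*k+1 - d))) = real (B (2*k+1))"
      by (rule partA) simp
    have T: "(\<Sum>d=0..k. 1 * real (conv_fib (d div 2) (k+1 - (d+1) div 2))) = real (B (k+1)) + real (B k)"
      using partT[of "\<lambda>_. 1" k] sumB by simp
    have c1: "(-1::real) ^ ((2*k+2) * d) = 1" for d
      by (simp add: power_mult)
    have e1: "(-1::real) ^ ((k+1) * (2*k+2)) = 1"
      by (metis c1 mult.commute)
    have "(\<Sum>d=0..(n - 2) div 2.
              real (conv_fib d (n - d - 1))
              + ((1 + (-1) ^ (n * d)) / 2) * real (conv_fib (d div 2) (n div 2 - (d + 1) div 2)))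
       = (\<Sum>d=0..k. real (conv_fib d (2*k+1 - d))) + (\<Sum>d=0..k. 1 * real (conv_fib (d div 2) (k+1 - (d+1) div 2)))"
      unfolding n by (simp add: sum.distrib c1)
    also have "\<dots> = real (B (2*k+1)) + real (B (k+1)) + real (B k)" using A T by simp
    finally have R: "(\<Sum>d=0..(n - 2) div 2.
              real (conv_fib d (n - d - 1))
              + ((1 + (-1) ^ (n * d)) / 2) * real (conv_fib (d div 2) (n div 2 - (d + 1) div 2)))
       = real (B (2*k+1)) + real (B (k+1)) + real (B k)" .
    have "(2 * k + 3) div 2 = k + 1" by presburger
    then show ?thesis unfolding R using B_closed[of "2*k+1"] B_closed[of "k+1"] B_closed[of k]
      by (simp add: n e1 algebra_simps)
  next
    assume n: "n = 2*k+3"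
    have A: "(\<Sum>d=0..k. real (conv_fib d (2*k+2 - d))) = real (B (2*k+2))"
      by (rule partA) simp
    define c :: "nat \<Rightarrow> real" where "c d = (1 + (-1) ^ ((2*k+3) * d)) / 2" for d
    have c0: "c (2*e) = 1" "c (Suc (2*e)) = 0" for e
      unfolding c_def by (simp_all add: power_mult power_add)
    have T: "(\<Sum>d=0..k. c d * real (conv_fib (d div 2) (k+1 - (d+1) div 2))) = real (B (k+1))"
      using partT[of c k] sumB by (simp add: c0)
    have "(\<Sum>d=0..(n - 2) div 2.
              real (conv_fib d (n - d - 1))
              + ((1 + (-1) ^ (n * d)) / 2) * real (conv_fib (d div 2) (n div 2 - (d + 1) div 2)))
       = (\<Sum>d=0..k. real (conv_fib d (2*k+2 - d))) + (\<Sum>d=0..k. c d * real (conv_fib (d div 2) (k+1 - (d+1) div 2)))"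
      unfolding n c_def by (simp add: sum.distrib)
    also have "\<dots> = real (B (2*k+2)) + real (B (k+1))" using A T by simp
    finally have R: "(\<Sum>d=0..(n - 2) div 2.
              real (conv_fib d (n - d - 1))
              + ((1 + (-1) ^ (n * d)) / 2) * real (conv_fib (d div 2) (n div 2 - (d + 1) div 2)))
       = real (B (2*k+2)) + real (B (k+1))" .
    have d: "(2 * k + 3 + 1) div 2 = k + 2" "(2 * k + 3) div 2 = k + 1" by presburger+
    have e: "(-1::real) ^ ((k+2) * (2*k+3)) = (-1) ^ k"
    proof -
      have "(-1::real) ^ ((k+2) * (2*k+3)) = (-1) ^ (2 * (k*k + 3*k + 3) + k)"
        by (simp add: algebra_simps)
      also have "\<dots> = (-1) ^ k" by (simp add: power_add power_mult)
      finally show ?thesis .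
    qed
    have L: "(1/3::real) * (2 ^ (n - 1)
            + ((5 + (-1) ^ n) / 2) * 2 ^ (n div 2 - 1)
            + (-1 + (-1) ^ n + 2 * (-1) ^ (((n + 1) div 2) * n)) / 2)
       = real (B (2*k+2)) + real (B (k+1))"
      unfolding n d e using B_closed[of "2*k+2"] B_closed[of "k+1"]
      by (simp add: field_simps)
    show ?thesis using L R by simp
  qed
qed

end
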